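(* Let $\mathcal{U}$ be a Hilbert space, $\mathcal{W},\mathcal{Y}$ reflexive Banach spaces, $\mathcal{G}$ a Hilbert space, $g^\delta\in\mathcal{G}$, $\alpha>0$, $A\in L(\mathcal{Y},\mathcal{W}^* )$ continuously invertible, $B\in L(\mathcal{U},\mathcal{W}^* )$, $C\in L(\mathcal{Y},\mathcal{G})$, and let $\mathcal{R}_\alpha=\frac\alpha2\|\cdot\|_\mathcal{U}^2$ and $J_\alpha(u,y)=\frac12\|Cy-g^\delta\|_\mathcal{G}^2+\mathcal{R}_\alpha(u)$. Let $\mathcal{U}_h\subset\mathcal{U}$, $\mathcal{Y}_h\subset\mathcal{Y}$, $\mathcal{W}_h\subset\mathcal{W}$ be finite-dimensional subspaces. Let $(\bar u,\bar y)$ minimize $J_\alpha(u,y)$ over $\mathcal{U}\times\mathcal{Y}$ subject to $Ay=Bu$, and let $(\bar u_h,\bar y_h)$ minimize $J_\alpha$ over $\mathcal{U}_h\times\mathcal{Y}_h$ subject to $\langle Ay-Bu,w_h\rangle_{\mathcal{W}^*,\mathcal{W}}=0$ for all $w_h\in\mathcal{W}_h$, with $\bar w_h\in\mathcal{W}_h$ such that $(\bar u_h,\bar y_h,\bar w_h)$ satisfies the discrete optimality system $$\langle C^*(C\bar y_h-g^\delta)+A^*\bar w_h,y_h\rangle_{\mathcal{Y}^*,\mathcal{Y}}=0\ \ \forall y_h\in\mathcal{Y}_h,\qquad \alpha\bar u_h-P_{\mathcal{U}_h}B^*\bar w_h=0,\qquad \langle A\bar y_h-B\bar u_h,w_h\rangle_{\mathcal{W}^*,\mathcal{W}}=0\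 \ \forall w_h\in\mathcal{W}_h.$$ Define the residuals $$\rho_w:=C^*(C\bar y_h-g^\delta)+A^*\bar w_h\in\mathcal{Y}^*,\qquad \rho_u:=\alpha\bar u_h-B^*\bar w_h\in\mathcal{U},\qquad \rho_y:=A\bar y_h-B\bar u_h\in\mathcal{W}^*.$$ Let $\sigma,\gamma$ satisfy either ($\sigma=4$ and $\gamma\ge2$) or ($\sigma>4$ and $\gamma>\frac{2\sigma}{\sigma+\sqrt{\sigma^2-4\sigma}}$). Then $$\alpha\|\bar u_h-\bar u\|_\mathcal{U}^2+\|C\bar y_h-C\bar y\|_\mathcal{G}^2\le\frac\gamma\alpha\|B^*(A^* )^{-1}\rho_w+\rho_u\|_\mathcal{U}^2+\sigma\|CA^{-1}\rho_y\|_\mathcal{G}^2,$$ $$J_\alpha(\bar u_h,\bar y_h)-J_\alpha(\bar u,\bar y)\le\frac1{2\alpha}\|B^*(A^* )^{-1}\rho_w+\rho_u\|_\mathcal{U}^2+(C\bar y_h-g^\delta,CA^{-1}\rho_y)_\mathcal{G}.$$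
   Context: Adjoints: $A^*\in L(\mathcal{W},\mathcal{Y}^* )$ with $\langle Ay,w\rangle_{\mathcal{W}^*,\mathcal{W}}=\langle y,A^*w\rangle_{\mathcal{Y},\mathcal{Y}^*}$; $B^*\in L(\mathcal{W},\mathcal{U})$ with $\langle Bu,w\rangle_{\mathcal{W}^*,\mathcal{W}}=(u,B^*w)_\mathcal{U}$; $C^*\in L(\mathcal{G},\mathcal{Y}^* )$ with $(Cy,g)_\mathcal{G}=\langle y,C^*g\rangle_{\mathcal{Y},\mathcal{Y}^*}$. $P_{\mathcal{U}_h}$ is the orthogonal projection of $\mathcal{U}$ onto $\mathcal{U}_h$. *)

theory Defs
  imports "HOL-Analysis.Analysis"
begin

text \<open>Dual of a normed space X is modelled as the space of bounded linear functionals
  X \<Rightarrow>L real. The dual pairing <x, f> is blinfun_apply f x.\<close>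

definition reflexive_space :: "'a::real_normed_vector itself \<Rightarrow> bool" where
  "reflexive_space _ \<longleftrightarrow>
     (\<forall>\<phi> :: ('a \<Rightarrow>\<^sub>L real) \<Rightarrow>\<^sub>L real. \<exists>x::'a. \<forall>f. blinfun_apply \<phi> f = blinfun_apply f x)"

definition fd_subspace :: "'a::real_vector set \<Rightarrow> bool" where
  "fd_subspace S \<longleftrightarrow> subspace S \<and> (\<exists>B. finite B \<and> S = span B)"

definition orth_proj :: "'a::real_inner set \<Rightarrow> 'a \<Rightarrow> 'a" where
  "orth_proj S x = (THE p. p \<in> S \<and> (\<forall>v\<in>S. inner (x - p) v = 0))"

definition adjA :: "('y::real_normed_vector \<Rightarrow>\<^sub>L ('w::real_normed_vector \<Rightarrow>\<^sub>L real)) \<Rightarrow> 'w \<Rightarrow> ('y \<Rightarrow>\<^sub>L real)" where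
  "adjA A w = Blinfun (\<lambda>y. blinfun_apply (blinfun_apply A y) w)"

definition adjC :: "('y::real_normed_vector \<Rightarrow>\<^sub>L 'g::real_inner) \<Rightarrow> 'g \<Rightarrow> ('y \<Rightarrow>\<^sub>L real)" where
  "adjC C g = Blinfun (\<lambda>y. inner (blinfun_apply C y) g)"

definition Jalpha :: "real \<Rightarrow> ('y::real_normed_vector \<Rightarrow>\<^sub>L 'g::real_inner) \<Rightarrow> 'g \<Rightarrow> 'u::real_inner \<Rightarrow> 'y \<Rightarrow> real" where
  "Jalpha \<alpha> C g u y = (1/2) * (norm (blinfun_apply C y - g))^2 + (\<alpha>/2) * (norm u)^2"

end

theory Submission
  imports Defs
begin

lemma adjA_apply: "blinfun_apply (adjA A w) y = blinfun_apply (blinfun_apply A y) w"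
  unfolding adjA_def
  apply (subst bounded_linear_Blinfun_apply)
  using bounded_linear_compose[OF bounded_bilinear.bounded_linear_left[OF bounded_bilinear_blinfun_apply] blinfun.bounded_linear_right]
  by (simp_all add: o_def)
lemma adjC_apply: "blinfun_apply (adjC C g) y = inner (blinfun_apply C y) g"
  unfolding adjC_def
  apply (subst bounded_linear_Blinfun_apply)
  using bounded_linear_compose[OF bounded_bilinear.bounded_linear_left[OF bounded_bilinear_inner] blinfun.bounded_linear_right]
  by (simp_all add: o_def)
lemma quad_zero:
  fixes L Q :: real assumes "Q \<ge> 0" "\<forall>t. t*L + t^2*Q \<ge> 0" shows "L = 0"
proof (rule ccontr)
  assume "L \<noteq> 0"
  define t where "t = -L/(Q+1)"
  have q: "Q+1 > 0" using assms(1) by simp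
  have ts: "t*(Q+1) = -L" unfolding t_def using q by simp
  have "(t*L + t^2*Q) * (Q+1)^2 = (t*(Q+1))*L*(Q+1) + (t*(Q+1))^2*Q"
    by (simp add: power2_eq_square algebra_simps)
  also have "\<dots> = - (L^2)" unfolding ts by (simp add: power2_eq_square algebra_simps)
  finally have e: "(t*L + t^2*Q) * (Q+1)^2 = - (L^2)" .
  have "- (L^2) < 0" using \<open>L\<noteq>0\<close> by simp
  moreover have "(t*L + t^2*Q) * (Q+1)^2 \<ge> 0" using assms(2) q by simp
  ultimately show False using e by linarith
qed

lemma young_a:
  fixes x y a :: real assumes "a > 0" shows "x*y \<le> x^2/(2*a) + a*y^2/2"
proof -
  have "0 \<le> (x - a*y)^2" by simp
  hence "2*a*(x*y) \<le> x^2 + a^2*y^2" by (simp add: power2_eq_square algebra_simps)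
  hence "x*y \<le> (x^2 + a^2*y^2)/(2*a)" using assms by (simp add: field_simps)
  also have "\<dots> = x^2/(2*a) + a*y^2/2" using assms by (simp add: field_simps power2_eq_square)
  finally show ?thesis .
qed

theorem proposition3p1:
  fixes A :: "'y::banach \<Rightarrow>\<^sub>L ('w::banach \<Rightarrow>\<^sub>L real)"
    and B :: "'u::{real_inner,complete_space} \<Rightarrow>\<^sub>L ('w \<Rightarrow>\<^sub>L real)"
    and C :: "'y \<Rightarrow>\<^sub>L 'g::{real_inner,complete_space}"
    and Ainv :: "('w \<Rightarrow>\<^sub>L real) \<Rightarrow>\<^sub>L 'y"
    and Asinv :: "('y \<Rightarrow>\<^sub>L real) \<Rightarrow>\<^sub>L 'w"
    and Bs :: "'w \<Rightarrow> 'u"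
    and gd :: 'g and \<alpha> \<sigma> \<gamma> :: real
    and Uh :: "'u set" and Yh :: "'y set" and Wh :: "'w set"
    and ubar uh :: 'u and ybar yh :: 'y and wbar :: 'w
  assumes reflW: "reflexive_space TYPE('w)" and reflY: "reflexive_space TYPE('y)"
    and alpha_pos: "\<alpha> > 0"
    and Ainv1: "\<forall>y. Ainv (A y) = y" and Ainv2: "\<forall>f. A (Ainv f) = f"
    and Asinv1: "\<forall>w. Asinv (adjA A w) = w" and Asinv2: "\<forall>r. adjA A (Asinv r) = r"
    and Bs_adj: "\<forall>u w. blinfun_apply (B u) w = inner u (Bs w)"
    and Uh: "fd_subspace Uh" and Yh: "fd_subspace Yh" and Wh: "fd_subspace Wh"
    and cont_state: "A ybar = B ubar"
    and cont_min: "\<forall>u y. A y = B u \<longrightarrow> Jalpha \<alpha> C gd ubar ybar \<le> Jalpha \<alpha> C gd u y"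
    and uh_in: "uh \<in> Uh" and yh_in: "yh \<in> Yh" and wbar_in: "wbar \<in> Wh"
    and disc_state: "\<forall>w\<in>Wh. blinfun_apply (A yh - B uh) w = 0"
    and disc_min: "\<forall>u\<in>Uh. \<forall>y\<in>Yh. (\<forall>w\<in>Wh. blinfun_apply (A y - B u) w = 0)
                      \<longrightarrow> Jalpha \<alpha> C gd uh yh \<le> Jalpha \<alpha> C gd u y"
    and opt1: "\<forall>y\<in>Yh. blinfun_apply (adjC C (C yh - gd) + adjA A wbar) y = 0"
    and opt2: "\<alpha> *\<^sub>R uh - orth_proj Uh (Bs wbar) = 0"
    and opt3: "\<forall>w\<in>Wh. blinfun_apply (A yh - B uh) w = 0"
    and sg: "(\<sigma> = 4 \<and> \<gamma> \<ge> 2) \<or> (\<sigma> > 4 \<and> \<gamma> > 2 * \<sigma> / (\<sigma> + sqrt (\<sigma>^2 - 4 * \<sigma>)))"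
  defines "\<rho>w \<equiv> adjC C (C yh - gd) + adjA A wbar"
    and "\<rho>u \<equiv> \<alpha> *\<^sub>R uh - Bs wbar"
    and "\<rho>y \<equiv> A yh - B uh"
  shows "\<alpha> * (norm (uh - ubar))^2 + (norm (C yh - C ybar))^2
           \<le> \<gamma> / \<alpha> * (norm (Bs (Asinv \<rho>w) + \<rho>u))^2 + \<sigma> * (norm (C (Ainv \<rho>y)))^2
       \<and> Jalpha \<alpha> C gd uh yh - Jalpha \<alpha> C gd ubar ybar
           \<le> 1 / (2 * \<alpha>) * (norm (Bs (Asinv \<rho>w) + \<rho>u))^2 + inner (C yh - gd) (C (Ainv \<rho>y))"
proof -
  let ?Ai = "blinfun_apply Ainv" and ?A = "blinfun_apply A" and ?B = "blinfun_apply B" and ?C = "blinfun_apply C"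
  define d where "d v = ?C (?Ai (?B v))" for v
  define r where "r = ?C yh - gd"
  define rb where "rb = ?C ybar - gd"
  define z where "z = Bs (Asinv \<rho>w) + \<rho>u"
  define e where "e = uh - ubar"
  define a where "a = ?C yh - ?C ybar"
  define b where "b = ?C (?Ai \<rho>y)"
  have dlin: "d (s *\<^sub>R v) = s *\<^sub>R d v" for s v
    unfolding d_def by (simp add: blinfun.scaleR_right)
  have cont_opt: "inner rb (d v) + \<alpha> * inner ubar v = 0" for v
  proof -
    let ?L = "inner rb (d v) + \<alpha> * inner ubar v"
    let ?Q = "(inner (d v) (d v) + \<alpha> * inner v v)/2"
    have Q: "?Q \<ge> 0" using alpha_pos by simp
    have "t * ?L + t^2 * ?Q \<ge> 0" for t
    proof -
      have "?A (ybar + t *\<^sub>R ?Ai (?B v)) = ?B (ubar + t *\<^sub>R v)"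
        using cont_state Ainv2 by (simp add: blinfun.add_right blinfun.scaleR_right)
      hence le: "Jalpha \<alpha> C gd ubar ybar \<le> Jalpha \<alpha> C gd (ubar + t *\<^sub>R v) (ybar + t *\<^sub>R ?Ai (?B v))"
        using cont_min by blast
      have c: "?C (ybar + t *\<^sub>R ?Ai (?B v)) - gd = rb + t *\<^sub>R d v"
        unfolding rb_def d_def by (simp add: blinfun.add_right blinfun.scaleR_right)
      have "Jalpha \<alpha> C gd (ubar + t *\<^sub>R v) (ybar + t *\<^sub>R ?Ai (?B v)) - Jalpha \<alpha> C gd ubar ybar
            = t * ?L + t^2 * ?Q"
        unfolding Jalpha_def c rb_def[symmetric] power2_norm_eq_inner
        by (simp add: inner_add_left inner_add_right inner_commute power2_eq_square algebra_simps add_divide_distrib)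
      thus ?thesis using le by linarith
    qed
    thus ?thesis using quad_zero[OF Q] by blast
  qed
  have zv: "inner z v = inner r (d v) + \<alpha> * inner uh v" for v
  proof -
    have "inner (Bs (Asinv \<rho>w)) v = blinfun_apply (?B v) (Asinv \<rho>w)"
      using Bs_adj by (simp add: inner_commute)
    also have "\<dots> = blinfun_apply (?A (?Ai (?B v))) (Asinv \<rho>w)" using Ainv2 by simp
    also have "\<dots> = blinfun_apply (adjA A (Asinv \<rho>w)) (?Ai (?B v))" by (simp add: adjA_apply)
    also have "\<dots> = blinfun_apply \<rho>w (?Ai (?B v))" using Asinv2 by simp
    also have "\<dots> = inner (d v) r + blinfun_apply (?A (?Ai (?B v))) wbar"
      unfolding \<rho>w_def d_def r_def by (simp add: adjA_apply adjC_apply blinfun.add_left)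
    also have "\<dots> = inner (d v) r + inner v (Bs wbar)" using Ainv2 Bs_adj by simp
    finally have "inner (Bs (Asinv \<rho>w)) v = inner (d v) r + inner v (Bs wbar)" .
    thus ?thesis unfolding z_def \<rho>u_def
      by (simp add: inner_add_left inner_diff_left inner_add_right inner_diff_right inner_commute)
  qed
  have yd: "yh - ybar = ?Ai \<rho>y + ?Ai (?B e)"
  proof -
    have "?A (yh - ybar) = \<rho>y + ?B e"
      unfolding \<rho>y_def e_def using cont_state
      by (simp add: blinfun.diff_right blinfun.diff_left)
    hence "?Ai (?A (yh - ybar)) = ?Ai (\<rho>y + ?B e)" by simp
    thus ?thesis using Ainv1 by (simp add: blinfun.add_right)
  qed
  have ad: "a = b + d e"
  proof -
    have "a = ?C (yh - ybar)" unfolding a_def by (simp add: blinfun.diff_right)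
    also have "\<dots> = b + d e" unfolding yd b_def d_def by (simp add: blinfun.add_right)
    finally show ?thesis .
  qed
  have ra: "r - rb = a" unfolding r_def rb_def a_def by simp
  have ze: "inner z e = inner r (d e) + \<alpha> * inner uh e" by (rule zv)
  have ze2: "inner z e = inner a (d e) + \<alpha> * inner e e"
  proof -
    have "inner z e = inner z e - (inner rb (d e) + \<alpha> * inner ubar e)" using cont_opt[of e] by simp
    also have "\<dots> = inner (r - rb) (d e) + \<alpha> * inner (uh - ubar) e"
      unfolding ze by (simp add: inner_diff_left algebra_simps)
    finally show ?thesis unfolding ra e_def .
  qed
  have de: "d e = a - b" using ad by simp
  have key: "\<alpha> * inner e e + inner a a = inner z e + inner a b"
    using ze2 unfolding de by (simp add: inner_diff_right)
  have cs1: "inner z e \<le> norm z * norm e" by (rule norm_cauchy_schwarz)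
  have cs2: "inner a b \<le> norm a * norm b" by (rule norm_cauchy_schwarz)
  have y1: "norm z * norm e \<le> (norm z)^2/(2*\<alpha>) + \<alpha>*(norm e)^2/2" by (rule young_a[OF alpha_pos])
  have y2: "norm a * norm b \<le> (norm a)^2/2 + (norm b)^2/2" using young_a[of 1 "norm a" "norm b"] by simp
  have ee: "inner e e = (norm e)^2" "inner a a = (norm a)^2" by (simp_all add: power2_norm_eq_inner)
  have main1: "\<alpha> * (norm e)^2 + (norm a)^2 \<le> (norm z)^2/\<alpha> + (norm b)^2"
  proof -
    have h: "(norm z)^2/(2*\<alpha>) = ((norm z)^2/\<alpha>)/2" by simp
    have k: "\<alpha> * (norm e)^2 + (norm a)^2 = inner z e + inner a b" using key ee by simp
    show ?thesis using k cs1 cs2 y1 y2 h by linarith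
  qed
  have gs: "\<gamma> \<ge> 1 \<and> \<sigma> \<ge> 1"
    using sg
  proof
    assume h: "\<sigma> > 4 \<and> \<gamma> > 2 * \<sigma> / (\<sigma> + sqrt (\<sigma>^2 - 4 * \<sigma>))"
    have "sqrt (\<sigma>^2 - 4 * \<sigma>) \<le> sqrt (\<sigma>^2)" using h by (intro real_sqrt_le_mono) simp
    hence s1: "sqrt (\<sigma>^2 - 4 * \<sigma>) \<le> \<sigma>" using h by simp
    have "4 * \<sigma> \<le> \<sigma> * \<sigma>" using h by (intro mult_right_mono) auto
    hence s0: "sqrt (\<sigma>^2 - 4 * \<sigma>) \<ge> 0" by (simp add: power2_eq_square)
    have "2 * \<sigma> / (\<sigma> + sqrt (\<sigma>^2 - 4 * \<sigma>)) \<ge> 1"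
    proof -
      have p: "\<sigma> + sqrt (\<sigma>^2 - 4 * \<sigma>) > 0" using h s0 by linarith
      have "\<sigma> + sqrt (\<sigma>^2 - 4 * \<sigma>) \<le> 2 * \<sigma>" using s1 by linarith
      thus ?thesis using p by (simp add: le_divide_eq)
    qed
    thus ?thesis using h by linarith
  qed simp
  have g1: "(norm z)^2/\<alpha> \<le> \<gamma> / \<alpha> * (norm z)^2"
  proof -
    have "(norm z)^2/\<alpha> = 1 / \<alpha> * (norm z)^2" by simp
    also have "\<dots> \<le> \<gamma> / \<alpha> * (norm z)^2"
      using gs alpha_pos by (intro mult_right_mono divide_right_mono) auto
    finally show ?thesis .
  qed
  have s1: "(norm b)^2 \<le> \<sigma> * (norm b)^2" using gs by (simp add: mult_le_cancel_right1)
  have P1: "\<alpha> * (norm (uh - ubar))^2 + (norm (?C yh - ?C ybar))^2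
           \<le> \<gamma> / \<alpha> * (norm z)^2 + \<sigma> * (norm b)^2"
    using main1 g1 s1 unfolding e_def[symmetric] a_def[symmetric] by linarith
  have J: "Jalpha \<alpha> C gd uh yh - Jalpha \<alpha> C gd ubar ybar
      = inner z e + inner r b - inner a a / 2 - \<alpha> * inner e e / 2"
  proof -
    have rb': "rb = r - a" using ra by (simp add: algebra_simps)
    have ub: "ubar = uh - e" unfolding e_def by simp
    have "Jalpha \<alpha> C gd uh yh - Jalpha \<alpha> C gd ubar ybar
       = inner r a - inner a a / 2 + \<alpha> * inner uh e - \<alpha> * inner e e / 2"
      unfolding Jalpha_def r_def[symmetric] rb_def[symmetric] power2_norm_eq_inner rb' ub
      by (simp add: inner_diff_left inner_diff_right inner_commute algebra_simps)
    also have "\<dots> = inner z e + inner r b - inner a a / 2 - \<alpha> * inner e e / 2"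
      unfolding ze de by (simp add: inner_diff_right)
    finally show ?thesis .
  qed
  have P2: "Jalpha \<alpha> C gd uh yh - Jalpha \<alpha> C gd ubar ybar
      \<le> 1 / (2 * \<alpha>) * (norm z)^2 + inner r b"
  proof -
    have h: "(norm z)^2/(2*\<alpha>) = 1 / (2 * \<alpha>) * (norm z)^2" by simp
    have "0 \<le> inner a a" by simp
    moreover have "\<alpha> * inner e e = \<alpha> * (norm e)^2" using ee by simp
    ultimately show ?thesis using J cs1 y1 h by linarith
  qed
  show ?thesis using P1 P2 unfolding z_def b_def r_def by simp
qed

end
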